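(* Let $(X,\beta)$ be a locally finite prechart. For all $x,y\in X$, $\mathsf{bd}_\beta(x,y)=\inf_{i\in\mathbb{N}}\Phi^{(i)}_\beta(x,y)$, where $\Phi^{(0)}_\beta$ is the discrete pseudometric on $X$ and $\Phi^{(i+1)}_\beta=\Phi_\beta(\Phi^{(i)}_\beta)$.
   Context: Fix a set $V=\{v_1,v_2,\dots\}$ of variables and a set $\Sigma$ of letters. A prechart is a pair $(X,\beta)$ with $\beta:X\to P_{\mathrm{fin}}(\Sigma\times X+V)$; write $x\xrightarrow{a}x'$ iff $(a,x')\in\beta(x)$. It is locally finite if from each state only finitely many states are reachable by transitions. A 1-bounded pseudometric on $X$ is $d:X\times X\to[0,1]$ with $d(x,x)=0$, symmetry and triangle inequality; $D_X$ is the set of these, ordered pointwise. The discrete pseudometric is $\top(x,y)=0$ if $x=y$ and $1$ otherwise. For $d\in D_X$, $d^\uparrow$ on $\Sigma\times X+V$ is $d^\uparrow((a,x),(a,y))=\tfrac12 d(x,y)$, $d^\uparrow(m,n)=0$ if $m=n$, $1$ otherwise. $\mathcal H(d)(A,B)=\max\{\sup_{x\in A}\inf_{y\in B}d(x,y),\sup_{y\in B}\inf_{x\in A}d(y,x)\}$ with $\sup\emptyset=0$, $\inf\emptyset=1$. $\Phi_\beta(d)(x,y)=\mathcal H(d^\uparrow)(\beta(x),\beta(y))$, a monotone map on $D_X$; $\mathsf{bd}_\beta$ is its least fixpoint. *)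

theory Defs
  imports Main "HOL-Library.Extended_Real"
begin

(* A prechart on state type 'x, letters 'a, variables 'v:
   beta :: 'x => ('a * 'x + 'v) set, required to have finite values. *)
definition prechart :: "('x \<Rightarrow> ('a \<times> 'x + 'v) set) \<Rightarrow> bool" where
  "prechart \<beta> \<longleftrightarrow> (\<forall>x. finite (\<beta> x))"

definition trans_rel :: "('x \<Rightarrow> ('a \<times> 'x + 'v) set) \<Rightarrow> ('x \<times> 'x) set" where
  "trans_rel \<beta> = {(x, x'). \<exists>a. Inl (a, x') \<in> \<beta> x}"

definition locally_finite :: "('x \<Rightarrow> ('a \<times> 'x + 'v) set) \<Rightarrow> bool" where
  "locally_finite \<beta> \<longleftrightarrow> (\<forall>x. finite {y. (x, y) \<in> (trans_rel \<beta>)\<^sup>*})"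

definition pseudometric1 :: "('x \<Rightarrow> 'x \<Rightarrow> real) \<Rightarrow> bool" where
  "pseudometric1 d \<longleftrightarrow>
     (\<forall>x y. 0 \<le> d x y \<and> d x y \<le> 1) \<and> (\<forall>x. d x x = 0) \<and>
     (\<forall>x y. d x y = d y x) \<and> (\<forall>x y z. d x z \<le> d x y + d y z)"

definition discrete_pm :: "'x \<Rightarrow> 'x \<Rightarrow> real" where
  "discrete_pm x y = (if x = y then 0 else 1)"

definition lift_pm :: "('x \<Rightarrow> 'x \<Rightarrow> real) \<Rightarrow> ('a \<times> 'x + 'v) \<Rightarrow> ('a \<times> 'x + 'v) \<Rightarrow> real" where
  "lift_pm d u w = (case (u, w) of
      (Inl (a, x), Inl (b, y)) \<Rightarrow> (if a = b then d x y / 2 else 1)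
    | (Inr m, Inr n) \<Rightarrow> (if m = n then 0 else 1)
    | _ \<Rightarrow> 1)"

definition sup0 :: "real set \<Rightarrow> real" where
  "sup0 S = (if S = {} then 0 else Sup S)"

definition inf1 :: "real set \<Rightarrow> real" where
  "inf1 S = (if S = {} then 1 else Inf S)"

definition hausdorff :: "('b \<Rightarrow> 'b \<Rightarrow> real) \<Rightarrow> 'b set \<Rightarrow> 'b set \<Rightarrow> real" where
  "hausdorff d A B = max (sup0 ((\<lambda>x. inf1 ((\<lambda>y. d x y) ` B)) ` A))
                         (sup0 ((\<lambda>y. inf1 ((\<lambda>x. d y x) ` A)) ` B))"

definition Phi :: "('x \<Rightarrow> ('a \<times> 'x + 'v) set) \<Rightarrow> ('x \<Rightarrow> 'x \<Rightarrow> real) \<Rightarrow> ('x \<Rightarrow> 'x \<Rightarrow> real)" where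
  "Phi \<beta> d x y = hausdorff (lift_pm d) (\<beta> x) (\<beta> y)"

definition bd :: "('x \<Rightarrow> ('a \<times> 'x + 'v) set) \<Rightarrow> ('x \<Rightarrow> 'x \<Rightarrow> real)" where
  "bd \<beta> = (THE d. pseudometric1 d \<and> Phi \<beta> d = d \<and>
                  (\<forall>e. pseudometric1 e \<and> Phi \<beta> e = e \<longrightarrow> d \<le> e))"

definition Phi_iter :: "('x \<Rightarrow> ('a \<times> 'x + 'v) set) \<Rightarrow> nat \<Rightarrow> ('x \<Rightarrow> 'x \<Rightarrow> real)" where
  "Phi_iter \<beta> i = (Phi \<beta> ^^ i) discrete_pm"

end

theory Submission
  imports Defs
begin

lemma pm_b: "pseudometric1 d \<Longrightarrow> 0 \<le> d x y \<and> d x y \<le> 1"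
  unfolding pseudometric1_def by simp
lemma pm_r: "pseudometric1 d \<Longrightarrow> d x x = 0"
  unfolding pseudometric1_def by simp
lemma pm_s: "pseudometric1 d \<Longrightarrow> d x y = d y x"
  unfolding pseudometric1_def by simp
lemma pm_t: "pseudometric1 d \<Longrightarrow> d x z \<le> d x y + d y z"
  unfolding pseudometric1_def by simp

lemma inf1_le_elem: "finite B \<Longrightarrow> y \<in> B \<Longrightarrow> inf1 (f ` B) \<le> f y"
  unfolding inf1_def by (auto intro!: cInf_lower bdd_below_finite)

lemma inf1_attained: "finite B \<Longrightarrow> B \<noteq> {} \<Longrightarrow> \<exists>y\<in>B. inf1 (f ` B) = f y"
proof -
  assume a: "finite B" "B \<noteq> {}"
  have "Min (f ` B) \<in> f ` B" using a by (intro Min_in) auto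
  then obtain y where "y \<in> B" "Min (f ` B) = f y" by blast
  moreover have "inf1 (f ` B) = Min (f ` B)" using a unfolding inf1_def by (simp add: cInf_eq_Min)
  ultimately show ?thesis by auto
qed

lemma sup0_ge_elem: "finite A \<Longrightarrow> x \<in> A \<Longrightarrow> f x \<le> sup0 (f ` A)"
  unfolding sup0_def by (auto intro!: cSup_upper bdd_above_finite)

lemma sup0_attained: "finite A \<Longrightarrow> A \<noteq> {} \<Longrightarrow> \<exists>x\<in>A. sup0 (f ` A) = f x"
proof -
  assume a: "finite A" "A \<noteq> {}"
  have "Max (f ` A) \<in> f ` A" using a by (intro Max_in) auto
  then obtain y where "y \<in> A" "Max (f ` A) = f y" by blast
  moreover have "sup0 (f ` A) = Max (f ` A)" using a unfolding sup0_def by (simp add: cSup_eq_Max)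
  ultimately show ?thesis by auto
qed

lemma inf1_mono_c:
  assumes "finite B" "\<And>y. y \<in> B \<Longrightarrow> f y \<le> g y + c" "0 \<le> c"
  shows "inf1 (f ` B) \<le> inf1 (g ` B) + c"
proof (cases "B = {}")
  case True then show ?thesis using assms(3) by (simp add: inf1_def)
next
  case False
  obtain y where y: "y \<in> B" "inf1 (g ` B) = g y" using inf1_attained[OF assms(1) False, of g] by blast
  have "inf1 (f ` B) \<le> f y" by (rule inf1_le_elem[OF assms(1) y(1)])
  then show ?thesis using y assms(2)[OF y(1)] by linarith
qed

lemma sup0_mono_c:
  assumes "finite A" "\<And>y. y \<in> A \<Longrightarrow> f y \<le> g y + c" "0 \<le> c"
  shows "sup0 (f ` A) \<le> sup0 (g ` A) + c"
proof (cases "A = {}")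
  case True then show ?thesis using assms(3) by (simp add: sup0_def)
next
  case False
  obtain y where y: "y \<in> A" "sup0 (f ` A) = f y" using sup0_attained[OF assms(1) False, of f] by blast
  have "g y \<le> sup0 (g ` A)" by (rule sup0_ge_elem[OF assms(1) y(1)])
  then show ?thesis using y assms(2)[OF y(1)] by linarith
qed

lemma hausdorff_mono_c:
  assumes "finite A" "finite B" "\<And>u w. f u w \<le> g u w + c" "0 \<le> c"
  shows "hausdorff f A B \<le> hausdorff g A B + c"
proof -
  have 1: "sup0 ((\<lambda>x. inf1 ((\<lambda>y. f x y) ` B)) ` A) \<le> sup0 ((\<lambda>x. inf1 ((\<lambda>y. g x y) ` B)) ` A) + c"
    by (rule sup0_mono_c[OF assms(1) _ assms(4)], rule inf1_mono_c[OF assms(2) assms(3) assms(4)])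
  have 2: "sup0 ((\<lambda>y. inf1 ((\<lambda>x. f y x) ` A)) ` B) \<le> sup0 ((\<lambda>y. inf1 ((\<lambda>x. g y x) ` A)) ` B) + c"
    by (rule sup0_mono_c[OF assms(2) _ assms(4)], rule inf1_mono_c[OF assms(1) assms(3) assms(4)])
  show ?thesis using 1 2 unfolding hausdorff_def by linarith
qed

lemma inf1_bounds: "(\<And>y. 0 \<le> f y \<and> f y \<le> 1) \<Longrightarrow> finite B \<Longrightarrow> 0 \<le> inf1 (f ` B) \<and> inf1 (f ` B) \<le> 1"
proof (cases "B = {}")
  case False
  assume b: "\<And>y. 0 \<le> f y \<and> f y \<le> 1" "finite B"
  then obtain y where "inf1 (f ` B) = f y" using inf1_attained False by blast
  then show ?thesis using b by simp
qed (simp add: inf1_def)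

lemma sup0_bounds: "(\<And>y. 0 \<le> f y \<and> f y \<le> 1) \<Longrightarrow> finite B \<Longrightarrow> 0 \<le> sup0 (f ` B) \<and> sup0 (f ` B) \<le> 1"
proof (cases "B = {}")
  case False
  assume b: "\<And>y. 0 \<le> f y \<and> f y \<le> 1" "finite B"
  then obtain y where "sup0 (f ` B) = f y" using sup0_attained False by blast
  then show ?thesis using b by simp
qed (simp add: sup0_def)

definition pm1 :: "('b \<Rightarrow> 'b \<Rightarrow> real) \<Rightarrow> bool" where
  "pm1 l \<longleftrightarrow> (\<forall>x y. 0 \<le> l x y \<and> l x y \<le> 1) \<and> (\<forall>x. l x x = 0) \<and>
     (\<forall>x y. l x y = l y x) \<and> (\<forall>x y z. l x z \<le> l x y + l y z)"

lemma hausdorff_bounds: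
  assumes "pm1 l" "finite A" "finite B"
  shows "0 \<le> hausdorff l A B \<and> hausdorff l A B \<le> 1"
proof -
  have b: "\<And>x y. 0 \<le> l x y \<and> l x y \<le> 1" using assms(1) unfolding pm1_def by blast
  have i1: "\<And>x. 0 \<le> inf1 ((\<lambda>y. l x y) ` B) \<and> inf1 ((\<lambda>y. l x y) ` B) \<le> 1"
    by (rule inf1_bounds[OF b assms(3)])
  have i2: "\<And>x. 0 \<le> inf1 ((\<lambda>y. l x y) ` A) \<and> inf1 ((\<lambda>y. l x y) ` A) \<le> 1"
    by (rule inf1_bounds[OF b assms(2)])
  have s1: "0 \<le> sup0 ((\<lambda>x. inf1 ((\<lambda>y. l x y) ` B)) ` A) \<and> sup0 ((\<lambda>x. inf1 ((\<lambda>y. l x y) ` B)) ` A) \<le> 1"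
    by (rule sup0_bounds[OF i1 assms(2)])
  have s2: "0 \<le> sup0 ((\<lambda>y. inf1 ((\<lambda>x. l y x) ` A)) ` B) \<and> sup0 ((\<lambda>y. inf1 ((\<lambda>x. l y x) ` A)) ` B) \<le> 1"
    by (rule sup0_bounds[OF i2 assms(3)])
  show ?thesis using s1 s2 unfolding hausdorff_def by linarith
qed

lemma hausdorff_refl:
  assumes "pm1 l" "finite A"
  shows "hausdorff l A A = 0"
proof -
  have "\<And>x. x \<in> A \<Longrightarrow> inf1 ((\<lambda>y. l x y) ` A) \<le> 0"
  proof -
    fix x assume x: "x \<in> A"
    have "inf1 ((\<lambda>y. l x y) ` A) \<le> l x x" by (rule inf1_le_elem[OF assms(2) x])
    moreover have "l x x = 0" using assms(1) unfolding pm1_def by blast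
    ultimately show "inf1 ((\<lambda>y. l x y) ` A) \<le> 0" by simp
  qed
  then have "sup0 ((\<lambda>x. inf1 ((\<lambda>y. l x y) ` A)) ` A) \<le> sup0 ((\<lambda>x. 0) ` A) + 0"
    by (intro sup0_mono_c[OF assms(2)]) auto
  moreover have "sup0 ((\<lambda>x. (0::real)) ` A) = 0" by (simp add: sup0_def)
  moreover have "0 \<le> hausdorff l A A" using hausdorff_bounds[OF assms(1,2,2)] by blast
  ultimately show ?thesis unfolding hausdorff_def by simp
qed

lemma hausdorff_sym:
  assumes "pm1 l"
  shows "hausdorff l A B = hausdorff l B A"
proof -
  have "l = (\<lambda>x y. l y x)" using assms unfolding pm1_def by (auto intro!: ext)
  then have e: "\<And>x. (\<lambda>y. l y x) = l x" by metis
  show ?thesis unfolding hausdorff_def by (simp add: e max.commute)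
qed

lemma hausdorff_half_tri:
  assumes "pm1 l" "finite A" "finite B" "finite C" "x \<in> A"
  shows "inf1 ((\<lambda>z. l x z) ` C) \<le> hausdorff l A B + hausdorff l B C"
proof -
  have b: "\<And>x y. 0 \<le> l x y \<and> l x y \<le> 1" using assms(1) unfolding pm1_def by blast
  have h0: "0 \<le> hausdorff l A B" "0 \<le> hausdorff l B C"
    using hausdorff_bounds[OF assms(1,2,3)] hausdorff_bounds[OF assms(1,3,4)] by blast+
  have le1: "inf1 ((\<lambda>z. l x z) ` C) \<le> 1" using inf1_bounds[of "\<lambda>z. l x z", OF _ assms(4)] b by blast
  have hAB: "inf1 ((\<lambda>y. l x y) ` B) \<le> hausdorff l A B"
    unfolding hausdorff_def using sup0_ge_elem[OF assms(2) assms(5), of "\<lambda>x. inf1 ((\<lambda>y. l x y) ` B)"]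
    by linarith
  show ?thesis
  proof (cases "B = {}")
    case True
    then have "inf1 ((\<lambda>y. l x y) ` B) = 1" by (simp add: inf1_def)
    then show ?thesis using hAB h0 le1 by linarith
  next
    case Bne: False
    obtain y where y: "y \<in> B" "inf1 ((\<lambda>y. l x y) ` B) = l x y"
      using inf1_attained[OF assms(3) Bne] by blast
    have hBC: "inf1 ((\<lambda>z. l y z) ` C) \<le> hausdorff l B C"
      unfolding hausdorff_def using sup0_ge_elem[OF assms(3) y(1), of "\<lambda>x. inf1 ((\<lambda>z. l x z) ` C)"]
      by linarith
    show ?thesis
    proof (cases "C = {}")
      case True
      then have "inf1 ((\<lambda>z. l y z) ` C) = 1" by (simp add: inf1_def)
      then show ?thesis using hBC h0 le1 by linarith
    next
      case Cne: False
      obtain z where z: "z \<in> C" "inf1 ((\<lambda>z. l y z) ` C) = l y z"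
        using inf1_attained[OF assms(4) Cne] by blast
      have "inf1 ((\<lambda>z. l x z) ` C) \<le> l x z" using inf1_le_elem[OF assms(4) z(1)] .
      also have "\<dots> \<le> l x y + l y z" using assms(1) unfolding pm1_def by blast
      finally show ?thesis using hAB hBC y z by linarith
    qed
  qed
qed

lemma hausdorff_tri:
  assumes "pm1 l" "finite A" "finite B" "finite C"
  shows "hausdorff l A C \<le> hausdorff l A B + hausdorff l B C"
proof -
  have h0: "0 \<le> hausdorff l A B" "0 \<le> hausdorff l B C"
    using hausdorff_bounds[OF assms(1,2,3)] hausdorff_bounds[OF assms(1,3,4)] by blast+
  have 1: "sup0 ((\<lambda>x. inf1 ((\<lambda>z. l x z) ` C)) ` A) \<le> sup0 ((\<lambda>x. hausdorff l A B + hausdorff l B C) ` A) + 0"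
    by (rule sup0_mono_c[OF assms(2)]) (use hausdorff_half_tri[OF assms] in auto)
  have 2: "sup0 ((\<lambda>x. inf1 ((\<lambda>z. l x z) ` A)) ` C) \<le> sup0 ((\<lambda>x. hausdorff l C B + hausdorff l B A) ` C) + 0"
    by (rule sup0_mono_c[OF assms(4)]) (use hausdorff_half_tri[OF assms(1,4,3,2)] in auto)
  have s: "\<And>c::real. 0 \<le> c \<Longrightarrow> sup0 ((\<lambda>x. c) ` S) \<le> c" for S :: "'b set"
    by (simp add: sup0_def)
  have e: "hausdorff l C B + hausdorff l B A = hausdorff l A B + hausdorff l B C"
    using hausdorff_sym[OF assms(1)] by simp
  have a1: "sup0 ((\<lambda>x. inf1 ((\<lambda>z. l x z) ` C)) ` A) \<le> hausdorff l A B + hausdorff l B C"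
    using 1 s[of "hausdorff l A B + hausdorff l B C" A] h0 by linarith
  have a2: "sup0 ((\<lambda>x. inf1 ((\<lambda>z. l x z) ` A)) ` C) \<le> hausdorff l A B + hausdorff l B C"
    using 2 s[of "hausdorff l A B + hausdorff l B C" C] h0 e by simp
  show ?thesis unfolding hausdorff_def[of l A C] using a1 a2 by simp
qed

lemma lift_tri:
  assumes tri: "\<And>x y z. d x z \<le> d x y + d y z" and nn: "\<And>x y. 0 \<le> d x y" and le1: "\<And>x y. d x y \<le> 1"
  shows "lift_pm d u w \<le> lift_pm d u v + lift_pm d v w"
proof -
  have h: "d x z / 2 \<le> d x y / 2 + d y z / 2" for x y z using tri[of x z y] by simp
  have h2: "d x y / 2 \<le> 1 + c" if "0 \<le> c" for x y c using le1[of x y] that by simp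
  have h4: "d x y \<le> 4" for x y using le1[of x y] by simp
  show ?thesis
    by (cases u; cases v; cases w) (auto simp: lift_pm_def h h2 nn h4 tri)
qed

lemma lift_pm1:
  assumes "pseudometric1 d"
  shows "pm1 (lift_pm d)"
proof -
  have tri: "\<And>x y z. d x z \<le> d x y + d y z" and nn: "\<And>x y. 0 \<le> d x y" and le1: "\<And>x y. d x y \<le> 1"
   and sy: "\<And>x y. d x y = d y x" and rf: "\<And>x. d x x = 0"
    using pm_b[OF assms] pm_r[OF assms] pm_s[OF assms] pm_t[OF assms] by blast+
  have b: "0 \<le> lift_pm d u w \<and> lift_pm d u w \<le> 1" for u w
  proof -
    have "d x y \<le> 2" for x y using le1[of x y] by simp
    then show ?thesis using nn le1 by (cases u; cases w) (auto simp: lift_pm_def)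
  qed
  have r: "lift_pm d u u = 0" for u by (cases u) (auto simp: lift_pm_def rf)
  have s: "lift_pm d u w = lift_pm d w u" for u w by (cases u; cases w) (auto simp: lift_pm_def sy)
  show ?thesis unfolding pm1_def using b r s lift_tri[of d, OF tri nn le1] by blast
qed

lemma Phi_pm:
  assumes "prechart \<beta>" "pseudometric1 d"
  shows "pseudometric1 (Phi \<beta> d)"
proof -
  have l: "pm1 (lift_pm d)" using lift_pm1[OF assms(2)] .
  have f: "\<And>x. finite (\<beta> x)" using assms(1) unfolding prechart_def by blast
  show ?thesis unfolding pseudometric1_def Phi_def
    using hausdorff_bounds[OF l f f] hausdorff_refl[OF l f] hausdorff_sym[OF l]
      hausdorff_tri[OF l f f f] by blast
qed

lemma lift_mono_c:
  assumes "\<And>x y. d x y \<le> d' x y + c" "0 \<le> c"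
  shows "lift_pm d u w \<le> lift_pm d' u w + c / 2"
proof -
  have "d x y / 2 \<le> d' x y / 2 + c / 2" for x y using assms(1)[of x y] by simp
  then show ?thesis using assms(2) by (cases u; cases w) (auto simp: lift_pm_def)
qed

lemma Phi_mono_c:
  assumes "prechart \<beta>" "\<And>x y. d x y \<le> d' x y + c" "0 \<le> c"
  shows "Phi \<beta> d x y \<le> Phi \<beta> d' x y + c / 2"
proof -
  have f: "\<And>x. finite (\<beta> x)" using assms(1) unfolding prechart_def by blast
  show ?thesis unfolding Phi_def
    by (rule hausdorff_mono_c[OF f f]) (use lift_mono_c[OF assms(2,3)] assms(3) in auto)
qed

lemma Phi_contr:
  assumes "prechart \<beta>" "\<And>x y. \<bar>d x y - d' x y\<bar> \<le> c"
  shows "\<bar>Phi \<beta> d x y - Phi \<beta> d' x y\<bar> \<le> c / 2"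
proof -
  have c: "0 \<le> c" using assms(2)[of x y] by linarith
  have 1: "d u v \<le> d' u v + c" "d' u v \<le> d u v + c" for u v
    using assms(2)[of u v] by arith+
  show ?thesis using Phi_mono_c[of \<beta> d d' c x y, OF assms(1) 1(1) c] Phi_mono_c[of \<beta> d' d c x y, OF assms(1) 1(2) c]
    by linarith
qed

lemma iter_contr:
  assumes "prechart \<beta>" "\<And>x y. \<bar>d x y - d' x y\<bar> \<le> c"
  shows "\<bar>(Phi \<beta> ^^ n) d x y - (Phi \<beta> ^^ n) d' x y\<bar> \<le> c / 2 ^ n"
proof (induction n arbitrary: x y)
  case 0 then show ?case using assms(2) by simp
next
  case (Suc n)
  have "\<bar>Phi \<beta> ((Phi \<beta> ^^ n) d) x y - Phi \<beta> ((Phi \<beta> ^^ n) d') x y\<bar> \<le> (c / 2 ^ n) / 2"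
    by (rule Phi_contr[OF assms(1)]) (rule Suc.IH)
  then show ?case by (simp add: field_simps)
qed

lemma discrete_pm1: "pseudometric1 discrete_pm"
  unfolding pseudometric1_def discrete_pm_def by auto

lemma Phi_iter_Suc: "Phi_iter \<beta> (Suc i) = Phi \<beta> (Phi_iter \<beta> i)"
  unfolding Phi_iter_def by simp

lemma Phi_iter_pm: "prechart \<beta> \<Longrightarrow> pseudometric1 (Phi_iter \<beta> i)"
  by (induction i) (auto simp: Phi_iter_Suc discrete_pm1 Phi_pm, simp add: Phi_iter_def discrete_pm1)

lemma Phi_iter_dec:
  assumes "prechart \<beta>"
  shows "Phi_iter \<beta> (Suc i) x y \<le> Phi_iter \<beta> i x y"
proof (induction i arbitrary: x y)
  case 0
  have p: "pseudometric1 (Phi_iter \<beta> 1)" using Phi_iter_pm[OF assms] .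
  show ?case
  proof (cases "x = y")
    case True then show ?thesis using p unfolding pseudometric1_def
      by (simp add: Phi_iter_def discrete_pm_def)
  next
    case False then show ?thesis using p unfolding pseudometric1_def
      by (simp add: Phi_iter_def discrete_pm_def)
  qed
next
  case (Suc i)
  show ?case unfolding Phi_iter_Suc[of \<beta> "Suc i"]
    using Phi_mono_c[OF assms, of "Phi_iter \<beta> (Suc i)" "Phi_iter \<beta> i" 0] Suc.IH
    by (simp add: Phi_iter_Suc)
qed

lemma Phi_iter_antimono:
  assumes "prechart \<beta>" "i \<le> j"
  shows "Phi_iter \<beta> j x y \<le> Phi_iter \<beta> i x y"
  using assms(2)
proof (induction j rule: dec_induct)
  case base then show ?case by simp
next
  case (step j) then show ?case using Phi_iter_dec[OF assms(1), of j x y] by linarith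
qed

lemma Phi_iter_close:
  assumes "prechart \<beta>"
  shows "\<bar>Phi_iter \<beta> (i + k) x y - Phi_iter \<beta> i x y\<bar> \<le> 1 / 2 ^ i"
proof -
  have e: "Phi_iter \<beta> (i + k) = (Phi \<beta> ^^ i) (Phi_iter \<beta> k)"
    unfolding Phi_iter_def by (simp add: funpow_add)
  have "\<bar>Phi_iter \<beta> k u v - discrete_pm u v\<bar> \<le> 1" for u v
  proof -
    have "0 \<le> Phi_iter \<beta> k u v \<and> Phi_iter \<beta> k u v \<le> 1" "0 \<le> discrete_pm u v \<and> discrete_pm u v \<le> 1"
      using pm_b[OF Phi_iter_pm[OF assms, of k]] by (blast, simp add: discrete_pm_def)
    then show ?thesis by arith
  qed
  from iter_contr[of \<beta> "Phi_iter \<beta> k" discrete_pm 1 i x y, OF assms this] show ?thesis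
    unfolding e by (simp add: Phi_iter_def)
qed

lemma small_lemma:
  assumes "\<And>n::nat. a \<le> b + c / 2 ^ n" "0 \<le> (c::real)"
  shows "a \<le> (b::real)"
proof (rule ccontr)
  assume "\<not> a \<le> b"
  then have ab: "0 < a - b" by simp
  obtain n where n: "c / (a - b) < 2 ^ n" using real_arch_pow[of 2 "c / (a - b)"] by auto
  then have "c < (a - b) * 2 ^ n" using ab by (simp add: field_simps)
  then have "c / 2 ^ n < a - b" by (simp add: field_simps)
  then show False using assms(1)[of n] by linarith
qed

definition Lim_pm where "Lim_pm \<beta> x y = (INF i. Phi_iter \<beta> i x y)"

lemma L_le:
  assumes "prechart \<beta>"
  shows "Lim_pm \<beta> x y \<le> Phi_iter \<beta> i x y"
  unfolding Lim_pm_def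
  by (rule cINF_lower) (use pm_b[OF Phi_iter_pm[OF assms]] in \<open>auto intro!: bdd_belowI2[where m=0]\<close>)

lemma L_ge:
  assumes "prechart \<beta>"
  shows "Phi_iter \<beta> i x y - 1 / 2 ^ i \<le> Lim_pm \<beta> x y"
  unfolding Lim_pm_def
proof (rule cINF_greatest)
  fix j
  have "Phi_iter \<beta> (max i j) x y \<le> Phi_iter \<beta> j x y" by (rule Phi_iter_antimono[OF assms]) simp
  moreover have "\<bar>Phi_iter \<beta> (i + (max i j - i)) x y - Phi_iter \<beta> i x y\<bar> \<le> 1 / 2 ^ i"
    by (rule Phi_iter_close[OF assms])
  ultimately show "Phi_iter \<beta> i x y - 1 / 2 ^ i \<le> Phi_iter \<beta> j x y" by simp
qed simp

lemma L_pm: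
  assumes "prechart \<beta>"
  shows "pseudometric1 (Lim_pm \<beta>)"
proof -
  have P: "\<And>i. pseudometric1 (Phi_iter \<beta> i)" using Phi_iter_pm[OF assms] .
  have b: "0 \<le> Lim_pm \<beta> x y \<and> Lim_pm \<beta> x y \<le> 1" for x y
  proof
    show "0 \<le> Lim_pm \<beta> x y" unfolding Lim_pm_def
      by (rule cINF_greatest) (use pm_b[OF P] in auto)
    have "Phi_iter \<beta> 0 x y \<le> 1" using pm_b[OF P[of 0]] pm_r[OF P[of 0]] by blast
    then show "Lim_pm \<beta> x y \<le> 1" using L_le[OF assms, of x y 0] by linarith
  qed
  have r: "Lim_pm \<beta> x x = 0" for x
  proof -
    have "Phi_iter \<beta> 0 x x = 0" using pm_b[OF P[of 0]] pm_r[OF P[of 0]] by blast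
    then show ?thesis using L_le[OF assms, of x x 0] b[of x x] by linarith
  qed
  have s: "Lim_pm \<beta> x y = Lim_pm \<beta> y x" for x y
    unfolding Lim_pm_def using pm_s[OF P] by simp
  have t: "Lim_pm \<beta> x z \<le> Lim_pm \<beta> x y + Lim_pm \<beta> y z" for x y z
  proof (rule small_lemma[where c=2])
    fix n
    have "Lim_pm \<beta> x z \<le> Phi_iter \<beta> n x z" by (rule L_le[OF assms])
    also have "\<dots> \<le> Phi_iter \<beta> n x y + Phi_iter \<beta> n y z" by (rule pm_t[OF P[of n]])
    finally show "Lim_pm \<beta> x z \<le> Lim_pm \<beta> x y + Lim_pm \<beta> y z + 2 / 2 ^ n"
      using L_ge[OF assms, of n x y] L_ge[OF assms, of n y z] by simp
  qed simp
  show ?thesis unfolding pseudometric1_def using b r s t by blast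
qed

lemma L_fix:
  assumes "prechart \<beta>"
  shows "Phi \<beta> (Lim_pm \<beta>) = Lim_pm \<beta>"
proof (intro ext)
  fix x y
  have c: "\<bar>Phi \<beta> (Lim_pm \<beta>) x y - Lim_pm \<beta> x y\<bar> \<le> 1 / 2 ^ i" for i
  proof -
    have "\<bar>Lim_pm \<beta> u v - Phi_iter \<beta> i u v\<bar> \<le> 1 / 2 ^ i" for u v
      using L_le[OF assms, of u v i] L_ge[OF assms, of i u v] by arith
    from Phi_contr[of \<beta> "Lim_pm \<beta>" "Phi_iter \<beta> i" "1 / 2 ^ i" x y, OF assms this]
    have 1: "\<bar>Phi \<beta> (Lim_pm \<beta>) x y - Phi_iter \<beta> (Suc i) x y\<bar> \<le> 1 / 2 ^ Suc i"
      by (simp add: Phi_iter_Suc)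
    have 2: "\<bar>Lim_pm \<beta> x y - Phi_iter \<beta> (Suc i) x y\<bar> \<le> 1 / 2 ^ Suc i"
      using L_le[OF assms, of x y "Suc i"] L_ge[OF assms, of "Suc i" x y] by linarith
    have "(1::real) / 2 ^ Suc i + 1 / 2 ^ Suc i = 1 / 2 ^ i" by simp
    then show ?thesis using 1 2 by linarith
  qed
  show "Phi \<beta> (Lim_pm \<beta>) x y = Lim_pm \<beta> x y"
  proof (rule antisym)
    show "Phi \<beta> (Lim_pm \<beta>) x y \<le> Lim_pm \<beta> x y"
    proof (rule small_lemma[where c=1])
      fix n show "Phi \<beta> (Lim_pm \<beta>) x y \<le> Lim_pm \<beta> x y + 1 / 2 ^ n" using c[of n] by arith
    qed simp
    show "Lim_pm \<beta> x y \<le> Phi \<beta> (Lim_pm \<beta>) x y"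
    proof (rule small_lemma[where c=1])
      fix n show "Lim_pm \<beta> x y \<le> Phi \<beta> (Lim_pm \<beta>) x y + 1 / 2 ^ n" using c[of n] by arith
    qed simp
  qed
qed

lemma funpow_fix: "f a = a \<Longrightarrow> (f ^^ n) a = a"
  by (induction n) auto

lemma L_unique:
  assumes "prechart \<beta>" "pseudometric1 e" "Phi \<beta> e = e"
  shows "e = Lim_pm \<beta>"
proof (intro ext)
  fix x y
  have d1: "\<bar>e u v - Lim_pm \<beta> u v\<bar> \<le> 1" for u v
  proof -
    have "0 \<le> e u v \<and> e u v \<le> 1" "0 \<le> Lim_pm \<beta> u v \<and> Lim_pm \<beta> u v \<le> 1"
      using pm_b[OF assms(2)] pm_b[OF L_pm[OF assms(1)]] by blast+
    then show ?thesis by arith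
  qed
  have c: "\<bar>e x y - Lim_pm \<beta> x y\<bar> \<le> 1 / 2 ^ n" for n
  proof -
    have f1: "(Phi \<beta> ^^ n) e = e" by (rule funpow_fix[of "Phi \<beta>" e, OF assms(3)])
    have f2: "(Phi \<beta> ^^ n) (Lim_pm \<beta>) = Lim_pm \<beta>" by (rule funpow_fix[of "Phi \<beta>" "Lim_pm \<beta>", OF L_fix[OF assms(1)]])
    show ?thesis using iter_contr[of \<beta> e "Lim_pm \<beta>" 1 n x y, OF assms(1) d1] unfolding f1 f2 by simp
  qed
  show "e x y = Lim_pm \<beta> x y"
  proof (rule antisym)
    show "e x y \<le> Lim_pm \<beta> x y"
    proof (rule small_lemma[where c=1])
      fix n show "e x y \<le> Lim_pm \<beta> x y + 1 / 2 ^ n" using c[of n] by arith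
    qed simp
    show "Lim_pm \<beta> x y \<le> e x y"
    proof (rule small_lemma[where c=1])
      fix n show "Lim_pm \<beta> x y \<le> e x y + 1 / 2 ^ n" using c[of n] by arith
    qed simp
  qed
qed

theorem mainTheorem5:
  fixes \<beta> :: "'x \<Rightarrow> ('a \<times> 'x + 'v) set"
  assumes "prechart \<beta>" and "locally_finite \<beta>"
  shows "\<forall>x y. bd \<beta> x y = (INF i. Phi_iter \<beta> i x y)"
proof -
  have "bd \<beta> = Lim_pm \<beta>"
    unfolding bd_def
  proof (rule the_equality)
    show "pseudometric1 (Lim_pm \<beta>) \<and> Phi \<beta> (Lim_pm \<beta>) = Lim_pm \<beta> \<and>
      (\<forall>e. pseudometric1 e \<and> Phi \<beta> e = e \<longrightarrow> Lim_pm \<beta> \<le> e)"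
    proof (intro conjI allI impI)
      show "pseudometric1 (Lim_pm \<beta>)" by (rule L_pm[OF assms(1)])
      show "Phi \<beta> (Lim_pm \<beta>) = Lim_pm \<beta>" by (rule L_fix[OF assms(1)])
      fix e assume "pseudometric1 e \<and> Phi \<beta> e = e"
      then have "e = Lim_pm \<beta>" using L_unique[OF assms(1)] by blast
      then show "Lim_pm \<beta> \<le> e" by simp
    qed
  next
    fix d
    assume "pseudometric1 d \<and> Phi \<beta> d = d \<and> (\<forall>e. pseudometric1 e \<and> Phi \<beta> e = e \<longrightarrow> d \<le> e)"
    then show "d = Lim_pm \<beta>" using L_unique[OF assms(1), of d] by blast
  qed
  then show ?thesis by (simp add: Lim_pm_def)
qed

end
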